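(* Fix $m\in[n]$. There is a unique bijection $\psi_m$ between the set of complete $m$-chains of $\Pi(n)$ and the set of $(m,n)$-parking functions that sends a chain $C$ with top element $P$ and Jordan–Hölder permutation $\lambda$ to a partial parking function with priority forest $P$ and bird's eye permutation $\lambda^{-1}$. Explicitly, $\psi_m(C)=s_P\circ\lambda$, where $s_P$ is the shifted parent map of $P$.
   Context: Notation: $[n]=\{1,\dots,n\}$, $[n]_0=\{0,1,\dots,n\}$. Partial functions $f:[a]\to[b]$ are functions defined on a subset of $[a]$; a partial permutation is an injective one, and its inverse is the partial function defined on its image reversing it; compositions are defined where both steps are defined. Priority forests and the priority lattice: a priority forest (on $[n]_0$, with $m$ edges) is a rooted forest with vertex set $[n]_0$ and $m$ edges whose component trees $T_0,\dots,T_{n-m}$ are increasing (each non-root vertex has a larger label than its parent) and satisfy: for $j<k$ every label of $T_j$ is smaller than every label of $T_k$. The priority lattice $\Pi(n)$ consists of all priority forests on $[n]_0$ together with an extra top element $\hat1$; for priority forests $P\le P'$ iff $E(P)\subseteq E(P')$. The bottom $\hat0$ is the edgeless forest. A complete $m$-chain is a saturated chain $\hat0=P_0\lessdot P_1\lessdot\cdots\lessdot P_m$ of priority forests (each obtained from the previous by adding one edge). For priority forests $P\lessdot P'$, $\lambda(P,P')$ is the larger endpoint of the unique edge in $E(P')\setminus E(P)$; the Jordan–Hölder permutation of such a chain is the injective map $\lambda:[m]\to[n]$, $i\mapsto\lambda(P_{i-1},P_i)$, with partial inverse $\lambda^{-1}:[n]\to[m]$. Shifted parent map: for a priority forest $P$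 with parent map $p$ (defined on non-root vertices), $s_P:[n]\to[n]$ is the partial function with $s_P(i)=p(i)+1$ for every non-root vertex $i$ and undefined at roots. Partial parking functions: an $(m,n)$-parking function is a map $\pi:[m]\to[n]$ such that when cars $1,\dots,m$ arrive in this order to a one-way street with spots $1,\dots,n$, and car $i$ parks in the first empty spot $\ge\pi(i)$, all $m$ cars park. Its bird's eye permutation $\omega_\pi:[n]\to[m]$ is the partial permutation sending an occupied spot to the car parked there (undefined on empty spots). The priority forest of $\pi$ is the priority forest (on $[n]_0$, with $m$ edges) whose shifted parent map is $\pi\circ\omega_\pi$, i.e. vertex $i$ is a non-root with parent $\pi(\omega_\pi(i))-1$ if spot $i$ is occupied, and a root otherwise. *)

theory Defs
  imports Main
begin

(* A priority forest on [n]_0 = {0..n} is represented by its edge set E,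
   edges written (parent, child).  Each vertex
   has at most one parent (rooted forest; acyclicity follows from
   parent < child). *)

definition conn :: "(nat \<times> nat) set \<Rightarrow> (nat \<times> nat) set" where
  "conn E = (E \<union> E\<inverse>)\<^sup>*"

definition is_pforest :: "nat \<Rightarrow> (nat \<times> nat) set \<Rightarrow> bool" where
  "is_pforest n E \<longleftrightarrow>
     E \<subseteq> {(a, b). a < b \<and> b \<le> n} \<and>
     (\<forall>a a' b. (a, b) \<in> E \<longrightarrow> (a', b) \<in> E \<longrightarrow> a = a') \<and>
     (\<forall>x \<le> n. \<forall>y \<le> n. (x, y) \<notin> conn E \<longrightarrow>
        ((\<forall>u v. (x, u) \<in> conn E \<longrightarrow> (y, v) \<in> conn E \<longrightarrow> u < v) \<or>
         (\<forall>u v. (x, u) \<in> conn E \<longrightarrow> (y, v) \<in> conn E \<longrightarrow> v < u)))"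

definition complete_chains :: "nat \<Rightarrow> nat \<Rightarrow> (nat \<times> nat) set list set" where
  "complete_chains n m = {C. length C = Suc m \<and> C ! 0 = {} \<and>
      (\<forall>i \<le> m. is_pforest n (C ! i)) \<and>
      (\<forall>i < m. \<exists>e. e \<notin> C ! i \<and> C ! Suc i = insert e (C ! i))}"

definition jh :: "(nat \<times> nat) set list \<Rightarrow> nat \<Rightarrow> nat option" where
  "jh C i = (if 1 \<le> i \<and> i \<le> length C - 1
             then Some (let e = the_elem (C ! i - C ! (i - 1)) in max (fst e) (snd e))
             else None)"

definition map_inv :: "('a \<Rightarrow> 'b option) \<Rightarrow> 'b \<Rightarrow> 'a option" where
  "map_inv f y = (if \<exists>x. f x = Some y then Some (THE x. f x = Some y) else None)"

definition shifted_parent :: "(nat \<times> nat) set \<Rightarrow> nat \<Rightarrow> nat option" where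
  "shifted_parent E i = (if \<exists>a. (a, i) \<in> E then Some ((THE a. (a, i) \<in> E) + 1) else None)"

(* Parking process.  park_state n \<pi> k : spot \<Rightarrow> car, after cars 1..k arrived;
   car k parks in the first empty spot \<ge> \<pi>(k) among spots 1..n. *)
primrec park_state :: "nat \<Rightarrow> (nat \<Rightarrow> nat option) \<Rightarrow> nat \<Rightarrow> (nat \<Rightarrow> nat option)" where
  "park_state n \<pi> 0 = Map.empty"
| "park_state n \<pi> (Suc k) =
     (let \<omega> = park_state n \<pi> k in
      case \<pi> (Suc k) of
        None \<Rightarrow> \<omega>
      | Some a \<Rightarrow>
          (if \<exists>s. a \<le> s \<and> s \<le> n \<and> \<omega> s = None
           then \<omega>((LEAST s. a \<le> s \<and> s \<le> n \<and> \<omega> s = None) \<mapsto> Suc k)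
           else \<omega>))"

definition parking_functions :: "nat \<Rightarrow> nat \<Rightarrow> (nat \<Rightarrow> nat option) set" where
  "parking_functions m n = {\<pi>. dom \<pi> = {1..m} \<and> ran \<pi> \<subseteq> {1..n} \<and>
      (\<forall>k \<in> {1..m}. \<exists>s. the (\<pi> k) \<le> s \<and> s \<le> n \<and> park_state n \<pi> (k - 1) s = None)}"

definition birdseye :: "nat \<Rightarrow> nat \<Rightarrow> (nat \<Rightarrow> nat option) \<Rightarrow> nat \<Rightarrow> nat option" where
  "birdseye m n \<pi> = park_state n \<pi> m"

(* Priority forest of \<pi>: edge set whose shifted parent map is \<pi> \<circ> \<omega>_\<pi>,
   i.e. occupied spot i has parent \<pi>(\<omega>_\<pi>(i)) - 1. *)
definition pf_forest :: "nat \<Rightarrow> nat \<Rightarrow> (nat \<Rightarrow> nat option) \<Rightarrow> (nat \<times> nat) set" where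
  "pf_forest m n \<pi> = {(a - 1, i) | a i. (\<pi> \<circ>\<^sub>m birdseye m n \<pi>) i = Some a}"

end

theory Submission
  imports Defs
begin


lemma conn_sym: "(x,y) \<in> conn E \<Longrightarrow> (y,x) \<in> conn E"
proof -
  assume "(x,y) \<in> conn E"
  hence "(y,x) \<in> ((E \<union> E\<inverse>)\<^sup>*)\<inverse>" unfolding conn_def by simp
  also have "((E \<union> E\<inverse>)\<^sup>*)\<inverse> = (E \<union> E\<inverse>)\<^sup>*"
    by (simp add: rtrancl_converse[symmetric] converse_Un sup_commute)
  finally show ?thesis unfolding conn_def .
qed

lemma conn_trans: "(x,y) \<in> conn E \<Longrightarrow> (y,z) \<in> conn E \<Longrightarrow> (x,z) \<in> conn E"
  unfolding conn_def by (rule rtrancl_trans)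

lemma conn_edge: "(x,y) \<in> E \<Longrightarrow> (x,y) \<in> conn E"
  unfolding conn_def by auto

lemma conn_edge': "(x,y) \<in> E \<Longrightarrow> (y,x) \<in> conn E"
  unfolding conn_def by auto

lemma root_conn_desc:
  assumes up: "\<forall>a a' b. (a, b) \<in> E \<longrightarrow> (a', b) \<in> E \<longrightarrow> a = a'"
    and root: "\<forall>a. (a, j) \<notin> E"
    and c: "(j, x) \<in> conn E"
  shows "(j, x) \<in> E\<^sup>*"
  using c unfolding conn_def
proof (induction rule: rtrancl_induct)
  case base
  then show ?case by simp
next
  case (step y z)
  show ?case
  proof (cases "(y,z) \<in> E")
    case True
    then show ?thesis using step by auto
  next
    case False
    hence zy: "(z,y) \<in> E" using step by auto
    have "y \<noteq> j" using zy root by auto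
    hence "(j,y) \<in> E\<^sup>+" using step.IH rtranclD by metis
    then obtain w where "(j,w) \<in> E\<^sup>*" "(w,y) \<in> E" by (meson tranclD2)
    with zy up show ?thesis by metis
  qed
qed

lemma rtrancl_incr:
  assumes "E \<subseteq> {(a, b). a < b}" "(x,y) \<in> E\<^sup>*"
  shows "x \<le> (y::nat)"
  using assms(2) by (induction rule: rtrancl_induct) (use assms(1) in auto)

lemma ordering_generic:
  fixes g :: "nat \<Rightarrow> nat"
  assumes edge: "\<And>x y. (x,y) \<in> E \<Longrightarrow> g x = g y"
    and mono: "\<And>x y. x \<le> y \<Longrightarrow> g x \<le> g y"
    and toroot: "\<And>x. (x, g x) \<in> conn E"
    and nc: "(x, y) \<notin> conn E"
  shows "(\<forall>u v. (x, u) \<in> conn E \<longrightarrow> (y, v) \<in> conn E \<longrightarrow> u < v) \<or>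
         (\<forall>u v. (x, u) \<in> conn E \<longrightarrow> (y, v) \<in> conn E \<longrightarrow> v < u)"
proof -
  have inv: "g a = g b" if "(a,b) \<in> conn E" for a b
    using that unfolding conn_def
    by (induction rule: rtrancl_induct) (auto dest: edge)
  have "g x \<noteq> g y"
  proof
    assume "g x = g y"
    hence "(x, y) \<in> conn E" using toroot[of x] toroot[of y] conn_sym conn_trans by metis
    with nc show False by simp
  qed
  hence "g x < g y \<or> g y < g x" by auto
  thus ?thesis
  proof
    assume lt: "g x < g y"
    show ?thesis
    proof (rule disjI1, intro allI impI)
      fix u v assume "(x,u) \<in> conn E" "(y,v) \<in> conn E"
      hence "g u < g v" using inv lt by metis
      thus "u < v" using mono by (meson not_le leD)
    qed
  next
    assume lt: "g y < g x"
    show ?thesis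
    proof (rule disjI2, intro allI impI)
      fix u v assume "(x,u) \<in> conn E" "(y,v) \<in> conn E"
      hence "g v < g u" using inv lt by metis
      thus "v < u" using mono by (meson not_le leD)
    qed
  qed
qed




definition edge :: "(nat \<times> nat) set list \<Rightarrow> nat \<Rightarrow> nat \<times> nat" where
  "edge C i = the_elem (C ! i - C ! (i - 1))"

abbreviation "pp C i \<equiv> fst (edge C i)"
abbreviation "bb C i \<equiv> snd (edge C i)"

lemma pf_edges: "is_pforest n E \<Longrightarrow> (a,b) \<in> E \<Longrightarrow> a < b \<and> b \<le> n"
  unfolding is_pforest_def by auto

lemma pf_up: "is_pforest n E \<Longrightarrow> (a,b) \<in> E \<Longrightarrow> (a',b) \<in> E \<Longrightarrow> a = a'"
  unfolding is_pforest_def by blast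

context
  fixes n m C assumes C: "C \<in> complete_chains n m"
begin

lemma len: "length C = Suc m" using C unfolding complete_chains_def by auto

lemma C0: "C ! 0 = {}" using C unfolding complete_chains_def by auto

lemma pf: "i \<le> m \<Longrightarrow> is_pforest n (C ! i)" using C unfolding complete_chains_def by auto

lemma step:
  assumes "1 \<le> i" "i \<le> m"
  shows "edge C i \<notin> C ! (i - 1) \<and> C ! i = insert (edge C i) (C ! (i - 1))"
proof -
  have "i - 1 < m" using assms by simp
  then obtain e where "e \<notin> C ! (i-1)" "C ! Suc (i-1) = insert e (C ! (i-1))"
    using C unfolding complete_chains_def by blast
  moreover have "Suc (i-1) = i" using assms by simp
  ultimately have "e \<notin> C ! (i-1)" "C ! i = insert e (C ! (i-1))" by auto
  moreover hence "C ! i - C ! (i-1) = {e}" by auto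
  ultimately show ?thesis unfolding edge_def by simp
qed

lemma chain_set: "i \<le> m \<Longrightarrow> C ! i = edge C ` {1..i}"
proof (induction i)
  case 0 then show ?case using C0 by simp
next
  case (Suc i)
  have "C ! Suc i = insert (edge C (Suc i)) (C ! i)" using step[of "Suc i"] Suc.prems by simp
  also have "\<dots> = edge C ` {1..Suc i}"
  proof -
    have "{1..Suc i} = insert (Suc i) {1..i}" by auto
    thus ?thesis using Suc by simp
  qed
  finally show ?case .
qed

lemma edge_in: "1 \<le> c \<Longrightarrow> c \<le> i \<Longrightarrow> i \<le> m \<Longrightarrow> edge C c \<in> C ! i"
  using chain_set by auto

lemma edge_lt: "1 \<le> i \<Longrightarrow> i \<le> m \<Longrightarrow> pp C i < bb C i \<and> bb C i \<le> n"
  using pf_edges[OF pf, of m "pp C i" "bb C i"] edge_in[of i m] by simp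

lemma jh_eq: "jh C i = (if 1 \<le> i \<and> i \<le> m then Some (bb C i) else None)"
  using edge_lt[of i] unfolding jh_def len edge_def[symmetric] by (auto simp: Let_def max_def)

lemma no_parent: "1 \<le> i \<Longrightarrow> i \<le> m \<Longrightarrow> (a, bb C i) \<notin> C ! (i - 1)"
proof
  assume a: "1 \<le> i" "i \<le> m" "(a, bb C i) \<in> C ! (i - 1)"
  hence "(a, bb C i) \<in> C ! i" using step by auto
  moreover have "(pp C i, bb C i) \<in> C ! i" using edge_in a by auto
  ultimately have "a = pp C i" using pf_up[OF pf[OF a(2)]] by blast
  thus False using a step[OF a(1,2)] by simp
qed

lemma bb_inj: "1 \<le> c \<Longrightarrow> c < i \<Longrightarrow> i \<le> m \<Longrightarrow> bb C c \<noteq> bb C i"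
proof
  assume a: "1 \<le> c" "c < i" "i \<le> m" "bb C c = bb C i"
  have "edge C c \<in> C ! (i - 1)" using edge_in[of c "i - 1"] a by simp
  hence "(pp C c, bb C i) \<in> C ! (i - 1)" using a(4) by (metis prod.collapse)
  thus False using no_parent[of i "pp C c"] a by simp
qed

lemma bb_inj': "1 \<le> c \<Longrightarrow> c \<le> m \<Longrightarrow> 1 \<le> i \<Longrightarrow> i \<le> m \<Longrightarrow> bb C c = bb C i \<Longrightarrow> c = i"
  using bb_inj by (metis linorder_neq_iff)

lemma has_parent: "i \<le> m \<Longrightarrow> (a, j) \<in> C ! i \<Longrightarrow> \<exists>c. 1 \<le> c \<and> c \<le> i \<and> bb C c = j"
proof -
  assume "i \<le> m" "(a, j) \<in> C ! i"
  then obtain c where "c \<in> {1..i}" "edge C c = (a, j)" using chain_set by auto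
  thus ?thesis by auto
qed

lemma keyA:
  assumes i: "1 \<le> i" "i \<le> m" and j: "pp C i < j" "j < bb C i"
  shows "\<exists>c. 1 \<le> c \<and> c < i \<and> bb C c = j"
proof (rule ccontr)
  assume nc: "\<not> ?thesis"
  let ?E = "C ! i"
  have pfE: "is_pforest n ?E" using pf i by simp
  have root: "\<forall>a. (a, j) \<notin> ?E"
  proof (intro allI notI)
    fix a assume "(a,j) \<in> ?E"
    then obtain c where "1 \<le> c" "c \<le> i" "bb C c = j" using has_parent i by blast
    with nc j show False by (cases "c = i") auto
  qed
  have eE: "(pp C i, bb C i) \<in> ?E" using edge_in i by simp
  have bn: "bb C i \<le> n" using edge_lt i by simp
  have up: "\<forall>a a' b. (a, b) \<in> ?E \<longrightarrow> (a', b) \<in> ?E \<longrightarrow> a = a'" using pf_up[OF pfE] by blast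
  show False
  proof (cases "(j, bb C i) \<in> conn ?E")
    case True
    hence "(j, pp C i) \<in> conn ?E" using conn_edge'[OF eE] conn_trans by blast
    hence "(j, pp C i) \<in> ?E\<^sup>*" using root_conn_desc[OF up root] by blast
    hence "j \<le> pp C i" using rtrancl_incr[of ?E] pfE unfolding is_pforest_def by blast
    with j show False by simp
  next
    case False
    have "j \<le> n" "bb C i \<le> n" using j bn by auto
    with False pfE have
      "(\<forall>u v. (j, u) \<in> conn ?E \<longrightarrow> (bb C i, v) \<in> conn ?E \<longrightarrow> u < v) \<or>
       (\<forall>u v. (j, u) \<in> conn ?E \<longrightarrow> (bb C i, v) \<in> conn ?E \<longrightarrow> v < u)"
      unfolding is_pforest_def by blast
    moreover have "(j,j) \<in> conn ?E" "(bb C i, bb C i) \<in> conn ?E" "(bb C i, pp C i) \<in> conn ?E"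
      using conn_edge'[OF eE] unfolding conn_def by auto
    ultimately show False using j by (meson not_less_iff_gr_or_eq)
  qed
qed

lemma sp_eq: "1 \<le> i \<Longrightarrow> i \<le> m \<Longrightarrow> shifted_parent (C ! m) (bb C i) = Some (pp C i + 1)"
proof -
  assume i: "1 \<le> i" "i \<le> m"
  have e: "(pp C i, bb C i) \<in> C ! m" using edge_in i by simp
  have "(THE a. (a, bb C i) \<in> C ! m) = pp C i"
    using e pf_up[OF pf[of m]] by blast
  moreover have "\<exists>a. (a, bb C i) \<in> C ! m" using e by blast
  ultimately show ?thesis unfolding shifted_parent_def by simp
qed

lemma psi_eq: "(shifted_parent (C ! m) \<circ>\<^sub>m jh C) k = (if 1 \<le> k \<and> k \<le> m then Some (pp C k + 1) else None)"
  by (simp add: map_comp_def jh_eq sp_eq)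

end




definition psi :: "nat \<Rightarrow> (nat \<times> nat) set list \<Rightarrow> nat \<Rightarrow> nat option" where
  "psi m C = shifted_parent (C ! m) \<circ>\<^sub>m jh C"

context
  fixes n m C assumes C: "C \<in> complete_chains n m"
begin

lemma psi_eq': "psi m C k = (if 1 \<le> k \<and> k \<le> m then Some (pp C k + 1) else None)"
  unfolding psi_def using psi_eq[OF C] by simp

lemma least_b:
  assumes k: "1 \<le> k" "k \<le> m" and w: "\<forall>s. \<omega> s = None \<longleftrightarrow> s \<notin> bb C ` {1..k-1}"
  shows "(LEAST s. pp C k + 1 \<le> s \<and> s \<le> n \<and> \<omega> s = None) = bb C k"
proof (rule Least_equality)
  have "bb C k \<notin> bb C ` {1..k-1}" using bb_inj[OF C _ _ k(2)] by force
  thus "pp C k + 1 \<le> bb C k \<and> bb C k \<le> n \<and> \<omega> (bb C k) = None"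
    using edge_lt[OF C k] w by auto
next
  fix y assume y: "pp C k + 1 \<le> y \<and> y \<le> n \<and> \<omega> y = None"
  show "bb C k \<le> y"
  proof (rule ccontr)
    assume "\<not> bb C k \<le> y"
    then obtain c where "1 \<le> c" "c < k" "bb C c = y" using keyA[OF C k, of y] y by auto
    thus False using y w by auto
  qed
qed

lemma sim:
  "k \<le> m \<Longrightarrow> (\<forall>s. park_state n (psi m C) k s = None \<longleftrightarrow> s \<notin> bb C ` {1..k}) \<and>
     (\<forall>c\<in>{1..k}. park_state n (psi m C) k (bb C c) = Some c)"
proof (induction k)
  case 0 then show ?case by simp
next
  case (Suc k)
  let ?w = "park_state n (psi m C) k"
  have IH: "\<forall>s. ?w s = None \<longleftrightarrow> s \<notin> bb C ` {1..Suc k - 1}" "\<forall>c\<in>{1..k}. ?w (bb C c) = Some c"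
    using Suc by auto
  have k: "1 \<le> Suc k" "Suc k \<le> m" using Suc by auto
  have L: "(LEAST s. pp C (Suc k) + 1 \<le> s \<and> s \<le> n \<and> ?w s = None) = bb C (Suc k)"
    using least_b[OF k IH(1)] .
  have ex: "\<exists>s. pp C (Suc k) + 1 \<le> s \<and> s \<le> n \<and> ?w s = None"
    using LeastI_ex L least_b[OF k IH(1)] 
    by (metis (no_types, lifting) IH(1) bb_inj[OF C _ _ k(2)] edge_lt[OF C k] Suc_eq_plus1 Suc_leI atLeastAtMost_iff diff_Suc_1 imageE less_Suc_eq_le)
  have ps: "park_state n (psi m C) (Suc k) = ?w(bb C (Suc k) \<mapsto> Suc k)"
    using ex L k by (simp add: psi_eq' Let_def)
  have bnew: "bb C (Suc k) \<notin> bb C ` {1..k}" using bb_inj[OF C _ _ k(2)] by force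
  have bnew': "\<forall>c\<in>{1..k}. bb C c \<noteq> bb C (Suc k)" using bb_inj[OF C _ _ k(2)] by force
  have "{1..Suc k} = insert (Suc k) {1..k}" by auto
  then show ?case unfolding ps using IH bnew bnew' by auto
qed

lemma sim_m: "\<forall>s. park_state n (psi m C) m s = None \<longleftrightarrow> s \<notin> bb C ` {1..m}"
  "\<forall>c\<in>{1..m}. park_state n (psi m C) m (bb C c) = Some c"
  using sim by auto

lemma psi_pf: "psi m C \<in> parking_functions m n"
  unfolding parking_functions_def
proof (intro CollectI conjI ballI)
  show "dom (psi m C) = {1..m}" by (auto simp: psi_eq' dom_def)
  show "ran (psi m C) \<subseteq> {1..n}"
  proof
    fix v assume "v \<in> ran (psi m C)"
    then obtain k where "psi m C k = Some v" unfolding ran_def by auto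
    then have "1 \<le> k" "k \<le> m" "v = pp C k + 1" by (auto simp: psi_eq' split: if_splits)
    thus "v \<in> {1..n}" using edge_lt[OF C, of k] by auto
  qed
  fix k assume k: "k \<in> {1..m}"
  have "park_state n (psi m C) (k - 1) (bb C k) = None"
    using sim[of "k-1"] k bb_inj[OF C, of _ k] by force
  moreover have "the (psi m C k) \<le> bb C k" "bb C k \<le> n" using k edge_lt[OF C, of k] by (auto simp: psi_eq')
  ultimately show "\<exists>s. the (psi m C k) \<le> s \<and> s \<le> n \<and> park_state n (psi m C) (k - 1) s = None" by blast
qed

lemma psi_birdseye: "birdseye m n (psi m C) = map_inv (jh C)"
proof
  fix s
  show "birdseye m n (psi m C) s = map_inv (jh C) s"
  proof (cases "s \<in> bb C ` {1..m}")
    case True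
    then obtain c where c: "c \<in> {1..m}" "s = bb C c" by auto
    have "\<exists>x. jh C x = Some s" using c by (auto simp: jh_eq[OF C])
    moreover have "(THE x. jh C x = Some s) = c"
      using c bb_inj'[OF C] by (auto simp: jh_eq[OF C] split: if_splits)
    ultimately show ?thesis using sim_m c unfolding birdseye_def map_inv_def by simp
  next
    case False
    hence "\<not> (\<exists>x. jh C x = Some s)" by (auto simp: jh_eq[OF C] split: if_splits)
    then show ?thesis using sim_m False unfolding birdseye_def map_inv_def by simp
  qed
qed

lemma bird_some: "park_state n (psi m C) m y = Some c \<longleftrightarrow> c \<in> {1..m} \<and> y = bb C c"
proof
  assume a: "park_state n (psi m C) m y = Some c"
  then obtain c' where c': "c' \<in> {1..m}" "y = bb C c'" using sim_m(1) by (metis option.distinct(1) imageE)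
  thus "c \<in> {1..m} \<and> y = bb C c" using sim_m(2) a by auto
next
  assume "c \<in> {1..m} \<and> y = bb C c" thus "park_state n (psi m C) m y = Some c" using sim_m(2) by auto
qed

lemma psi_forest: "pf_forest m n (psi m C) = C ! m"
proof -
  have "pf_forest m n (psi m C) = edge C ` {1..m}"
  proof (rule set_eqI)
    fix e :: "nat \<times> nat"
    obtain x y where e: "e = (x,y)" by fastforce
    have "e \<in> pf_forest m n (psi m C) \<longleftrightarrow> (\<exists>a. x = a - 1 \<and> (psi m C \<circ>\<^sub>m birdseye m n (psi m C)) y = Some a)"
      unfolding pf_forest_def e by blast
    also have "\<dots> \<longleftrightarrow> (\<exists>c \<in> {1..m}. x = pp C c \<and> y = bb C c)"
    proof
      assume "\<exists>a. x = a - 1 \<and> (psi m C \<circ>\<^sub>m birdseye m n (psi m C)) y = Some a"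
      then obtain a c where "x = a - 1" "park_state n (psi m C) m y = Some c" "psi m C c = Some a"
        unfolding birdseye_def map_comp_def by (auto split: option.splits)
      thus "\<exists>c \<in> {1..m}. x = pp C c \<and> y = bb C c" using bird_some by (auto simp: psi_eq' split: if_splits)
    next
      assume "\<exists>c \<in> {1..m}. x = pp C c \<and> y = bb C c"
      then obtain c where c: "c \<in> {1..m}" "x = pp C c" "y = bb C c" by auto
      hence "park_state n (psi m C) m y = Some c" using bird_some by auto
      thus "\<exists>a. x = a - 1 \<and> (psi m C \<circ>\<^sub>m birdseye m n (psi m C)) y = Some a"
        using c unfolding birdseye_def map_comp_def by (auto simp: psi_eq')
    qed
    also have "\<dots> \<longleftrightarrow> e \<in> edge C ` {1..m}" unfolding e by (auto simp: prod_eq_iff)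
    finally show "e \<in> pf_forest m n (psi m C) \<longleftrightarrow> e \<in> edge C ` {1..m}" .
  qed
  thus ?thesis using chain_set[OF C, of m] by simp
qed

end



definition pos :: "nat \<Rightarrow> (nat \<Rightarrow> nat option) \<Rightarrow> nat \<Rightarrow> nat" where
  "pos n \<pi> k = (LEAST s. the (\<pi> k) \<le> s \<and> s \<le> n \<and> park_state n \<pi> (k - 1) s = None)"

definition ed :: "nat \<Rightarrow> (nat \<Rightarrow> nat option) \<Rightarrow> nat \<Rightarrow> nat \<times> nat" where
  "ed n \<pi> c = (the (\<pi> c) - 1, pos n \<pi> c)"

definition CH :: "nat \<Rightarrow> nat \<Rightarrow> (nat \<Rightarrow> nat option) \<Rightarrow> (nat \<times> nat) set list" where
  "CH n m \<pi> = map (\<lambda>i. ed n \<pi> ` {1..i}) [0..<Suc m]"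

context
  fixes n m \<pi> assumes P: "\<pi> \<in> parking_functions m n"
begin

lemma dom_pi: "dom \<pi> = {1..m}" using P unfolding parking_functions_def by auto

lemma pi_some: "c \<in> {1..m} \<Longrightarrow> \<pi> c = Some (the (\<pi> c))"
proof -
  assume "c \<in> {1..m}"
  hence "c \<in> dom \<pi>" using dom_pi by simp
  thus ?thesis by auto
qed

lemma pi_none: "c \<notin> {1..m} \<Longrightarrow> \<pi> c = None" using dom_pi by auto

lemma pi_range: "c \<in> {1..m} \<Longrightarrow> 1 \<le> the (\<pi> c) \<and> the (\<pi> c) \<le> n"
proof -
  assume c: "c \<in> {1..m}"
  hence "the (\<pi> c) \<in> ran \<pi>" using pi_some[OF c] unfolding ran_def by (metis (mono_tags) mem_Collect_eq)
  thus ?thesis using P unfolding parking_functions_def by auto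
qed

lemma pi_ex: "c \<in> {1..m} \<Longrightarrow> \<exists>s. the (\<pi> c) \<le> s \<and> s \<le> n \<and> park_state n \<pi> (c - 1) s = None"
  using P unfolding parking_functions_def by auto

lemma pos_props: "c \<in> {1..m} \<Longrightarrow> the (\<pi> c) \<le> pos n \<pi> c \<and> pos n \<pi> c \<le> n \<and> park_state n \<pi> (c - 1) (pos n \<pi> c) = None"
  unfolding pos_def using LeastI_ex[OF pi_ex] by blast

lemma pos_below: "c \<in> {1..m} \<Longrightarrow> the (\<pi> c) \<le> t \<Longrightarrow> t < pos n \<pi> c \<Longrightarrow> park_state n \<pi> (c - 1) t \<noteq> None"
proof
  assume a: "c \<in> {1..m}" "the (\<pi> c) \<le> t" "t < pos n \<pi> c" "park_state n \<pi> (c - 1) t = None"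
  have "t \<le> n" using a(3) pos_props[OF a(1)] by simp
  hence "pos n \<pi> c \<le> t" unfolding pos_def using a by (intro Least_le) simp
  thus False using a(3) by simp
qed

lemma park_char:
  "k \<le> m \<Longrightarrow> (\<forall>s. park_state n \<pi> k s = None \<longleftrightarrow> s \<notin> pos n \<pi> ` {1..k}) \<and>
     (\<forall>c\<in>{1..k}. park_state n \<pi> k (pos n \<pi> c) = Some c)"
proof (induction k)
  case 0 then show ?case by simp
next
  case (Suc k)
  let ?w = "park_state n \<pi> k"
  have k: "Suc k \<in> {1..m}" using Suc by auto
  have IH: "\<forall>s. ?w s = None \<longleftrightarrow> s \<notin> pos n \<pi> ` {1..k}" "\<forall>c\<in>{1..k}. ?w (pos n \<pi> c) = Some c"
    using Suc by auto
  have ex: "\<exists>s. the (\<pi> (Suc k)) \<le> s \<and> s \<le> n \<and> ?w s = None" using pi_ex[OF k] by simp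
  obtain a where a: "\<pi> (Suc k) = Some a" using pi_some[OF k] by blast
  hence ta: "the (\<pi> (Suc k)) = a" by simp
  have ps: "park_state n \<pi> (Suc k) = ?w(pos n \<pi> (Suc k) \<mapsto> Suc k)"
    using ex unfolding pos_def ta by (simp add: Let_def a)
  have new: "?w (pos n \<pi> (Suc k)) = None" using pos_props[OF k] by simp
  have bnew': "\<forall>c\<in>{1..k}. pos n \<pi> c \<noteq> pos n \<pi> (Suc k)"
  proof
    fix c assume c: "c \<in> {1..k}"
    show "pos n \<pi> c \<noteq> pos n \<pi> (Suc k)"
    proof
      assume "pos n \<pi> c = pos n \<pi> (Suc k)"
      hence "?w (pos n \<pi> (Suc k)) = Some c" using IH(2) c by metis
      thus False using new by simp
    qed
  qed
  have bnew: "pos n \<pi> (Suc k) \<notin> pos n \<pi> ` {1..k}" using new IH by auto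
  have "{1..Suc k} = insert (Suc k) {1..k}" by auto
  then show ?case unfolding ps using IH bnew bnew' by auto
qed

lemma cm1: "c \<in> {1..m} \<Longrightarrow> c - 1 \<le> m" by (simp only: atLeastAtMost_iff) arith

lemma pos_new: "c \<in> {1..m} \<Longrightarrow> pos n \<pi> c \<notin> pos n \<pi> ` {1..c-1}"
proof -
  assume c: "c \<in> {1..m}"
  have "park_state n \<pi> (c - 1) (pos n \<pi> c) = None" using pos_props[OF c] by blast
  thus ?thesis using park_char[OF cm1[OF c]] by blast
qed

lemma pos_inj: "c \<in> {1..m} \<Longrightarrow> c' \<in> {1..m} \<Longrightarrow> pos n \<pi> c = pos n \<pi> c' \<Longrightarrow> c = c'"
proof (rule ccontr)
  assume a: "c \<in> {1..m}" "c' \<in> {1..m}" "pos n \<pi> c = pos n \<pi> c'" "c \<noteq> c'"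
  show False
  proof (cases "c < c'")
    case True
    hence "c \<in> {1..c'-1}" using a(1) by (simp only: atLeastAtMost_iff) arith
    thus False using pos_new[OF a(2)] a(3) by (metis imageI)
  next
    case False
    hence "c' \<in> {1..c-1}" using a(2,4) by (simp only: atLeastAtMost_iff) arith
    thus False using pos_new[OF a(1)] a(3) by (metis imageI)
  qed
qed

lemma pos_fill: "c \<in> {1..m} \<Longrightarrow> the (\<pi> c) \<le> t \<Longrightarrow> t < pos n \<pi> c \<Longrightarrow> t \<in> pos n \<pi> ` {1..c-1}"
proof -
  assume a: "c \<in> {1..m}" "the (\<pi> c) \<le> t" "t < pos n \<pi> c"
  have "park_state n \<pi> (c - 1) t \<noteq> None" using pos_below[OF a(1) a(2) a(3)] .
  moreover have "park_state n \<pi> (c - 1) t = None \<longleftrightarrow> t \<notin> pos n \<pi> ` {1..c-1}"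
    using conjunct1[OF park_char[OF cm1[OF a(1)]]] by (rule spec)
  ultimately show ?thesis by metis
qed

lemma ed_lt: "c \<in> {1..m} \<Longrightarrow> fst (ed n \<pi> c) < snd (ed n \<pi> c) \<and> snd (ed n \<pi> c) \<le> n"
proof -
  assume c: "c \<in> {1..m}"
  have "1 \<le> the (\<pi> c)" "the (\<pi> c) \<le> pos n \<pi> c" "pos n \<pi> c \<le> n"
    using pi_range[OF c] pos_props[OF c] by auto
  hence "the (\<pi> c) - 1 < pos n \<pi> c" by arith
  thus ?thesis using \<open>pos n \<pi> c \<le> n\<close> unfolding ed_def by simp
qed

end



definition gr :: "nat set \<Rightarrow> nat \<Rightarrow> nat" where
  "gr Oc x = Max {r. (r = 0 \<or> r \<notin> Oc) \<and> r \<le> x}"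

lemma gr_props:
  shows "(gr Oc x = 0 \<or> gr Oc x \<notin> Oc) \<and> gr Oc x \<le> x"
    and "(r = 0 \<or> r \<notin> Oc) \<Longrightarrow> r \<le> x \<Longrightarrow> r \<le> gr Oc x"
proof -
  let ?S = "{r. (r = 0 \<or> r \<notin> Oc) \<and> r \<le> x}"
  have fin: "finite ?S" by (rule finite_subset[of _ "{..x}"]) auto
  have ne: "?S \<noteq> {}" by auto
  have "gr Oc x \<in> ?S" unfolding gr_def using Max_in[OF fin ne] .
  thus "(gr Oc x = 0 \<or> gr Oc x \<notin> Oc) \<and> gr Oc x \<le> x" by simp
  assume "(r = 0 \<or> r \<notin> Oc)" "r \<le> x"
  hence "r \<in> ?S" by simp
  thus "r \<le> gr Oc x" unfolding gr_def using Max_ge[OF fin] by blast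
qed

lemma gr_mono: "x \<le> y \<Longrightarrow> gr Oc x \<le> gr Oc y"
  using gr_props(1)[of Oc x] gr_props(2)[of "gr Oc x" Oc y] by auto

lemma gr_fixed: "(x = 0 \<or> x \<notin> Oc) \<Longrightarrow> gr Oc x = x"
  using gr_props(1)[of Oc x] gr_props(2)[of x Oc x] by auto

lemma gr_block:
  assumes "a \<le> s" and "\<And>t. a < t \<Longrightarrow> t \<le> s \<Longrightarrow> t \<in> Oc \<and> t \<noteq> 0"
  shows "gr Oc s = gr Oc a"
proof (rule antisym)
  show "gr Oc a \<le> gr Oc s" using gr_mono assms(1) by blast
  have g: "(gr Oc s = 0 \<or> gr Oc s \<notin> Oc)" "gr Oc s \<le> s" using gr_props(1) by auto
  have "gr Oc s \<le> a"
  proof (rule ccontr)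
    assume "\<not> gr Oc s \<le> a"
    hence "a < gr Oc s" by simp
    with assms(2) g show False by blast
  qed
  thus "gr Oc s \<le> gr Oc a" using gr_props(2)[of "gr Oc s" Oc a] g by blast
qed

lemma CH_len: "length (CH n m \<pi>) = Suc m" unfolding CH_def by simp

lemma CH_nth: "i \<le> m \<Longrightarrow> CH n m \<pi> ! i = ed n \<pi> ` {1..i}"
  unfolding CH_def by (simp del: upt_Suc add: nth_map_upt)

context
  fixes n m \<pi> assumes P: "\<pi> \<in> parking_functions m n"
begin

lemma F_pf: assumes i: "i \<le> m" shows "is_pforest n (ed n \<pi> ` {1..i})"
proof -
  let ?F = "ed n \<pi> ` {1..i}"
  let ?Oc = "pos n \<pi> ` {1..i}"
  have cm: "c \<in> {1..m}" if "c \<in> {1..i}" for c using that i by auto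
  have A1: "?F \<subseteq> {(a, b). a < b \<and> b \<le> n}"
  proof
    fix e assume "e \<in> ?F"
    then obtain c where c: "c \<in> {1..i}" "e = ed n \<pi> c" by auto
    thus "e \<in> {(a, b). a < b \<and> b \<le> n}" using ed_lt[OF P cm[OF c(1)]] by (cases e) auto
  qed
  have A2: "\<forall>a a' b. (a, b) \<in> ?F \<longrightarrow> (a', b) \<in> ?F \<longrightarrow> a = a'"
  proof (intro allI impI)
    fix a a' b assume "(a, b) \<in> ?F" "(a', b) \<in> ?F"
    then obtain c c' where c: "c \<in> {1..i}" "(a,b) = ed n \<pi> c" "c' \<in> {1..i}" "(a',b) = ed n \<pi> c'"
      by blast
    hence "pos n \<pi> c = pos n \<pi> c'" unfolding ed_def by simp
    hence "c = c'" using pos_inj[OF P cm[OF c(1)] cm[OF c(3)]] by simp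
    thus "a = a'" using c(2,4) by (metis prod.inject)
  qed
  have edge_g: "gr ?Oc x = gr ?Oc y" if "(x,y) \<in> ?F" for x y
  proof -
    obtain c where c: "c \<in> {1..i}" "(x,y) = ed n \<pi> c" using \<open>(x,y) \<in> ?F\<close> by blast
    have xy: "x = the (\<pi> c) - 1" "y = pos n \<pi> c" using c(2) unfolding ed_def by auto
    have r: "1 \<le> the (\<pi> c)" "the (\<pi> c) \<le> pos n \<pi> c" using pi_range[OF P cm[OF c(1)]] pos_props[OF P cm[OF c(1)]] by auto
    have "gr ?Oc y = gr ?Oc x"
    proof (rule gr_block)
      show "x \<le> y" using xy r by arith
      fix t assume t: "x < t" "t \<le> y"
      have "t \<in> ?Oc"
      proof (cases "t = y")
        case True thus ?thesis using xy c(1) by blast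
      next
        case False
        hence "the (\<pi> c) \<le> t" "t < pos n \<pi> c" using t xy r by arith+
        hence "t \<in> pos n \<pi> ` {1..c-1}" using pos_fill[OF P cm[OF c(1)]] by blast
        moreover have "{1..c-1} \<subseteq> {1..i}" using c(1) by auto
        ultimately show ?thesis by blast
      qed
      thus "t \<in> ?Oc \<and> t \<noteq> 0" using t by simp
    qed
    thus ?thesis by simp
  qed
  have toroot: "(x, gr ?Oc x) \<in> conn ?F" for x
  proof (induction x rule: less_induct)
    case (less x)
    show ?case
    proof (cases "x = 0 \<or> x \<notin> ?Oc")
      case True thus ?thesis using gr_fixed[of x ?Oc] unfolding conn_def by simp
    next
      case False
      then obtain c where c: "c \<in> {1..i}" "x = pos n \<pi> c" by auto
      let ?a = "the (\<pi> c) - 1"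
      have e: "(?a, x) \<in> ?F" using c unfolding ed_def by auto
      have "?a < x" using A1 e by auto
      hence "(?a, gr ?Oc ?a) \<in> conn ?F" using less by blast
      moreover have "gr ?Oc ?a = gr ?Oc x" using edge_g[OF e] .
      moreover have "(x, ?a) \<in> conn ?F" using conn_edge'[OF e] .
      ultimately show ?thesis using conn_trans by metis
    qed
  qed
  have A3: "\<forall>x \<le> n. \<forall>y \<le> n. (x, y) \<notin> conn ?F \<longrightarrow>
        ((\<forall>u v. (x, u) \<in> conn ?F \<longrightarrow> (y, v) \<in> conn ?F \<longrightarrow> u < v) \<or>
         (\<forall>u v. (x, u) \<in> conn ?F \<longrightarrow> (y, v) \<in> conn ?F \<longrightarrow> v < u))"
    using ordering_generic[of ?F "gr ?Oc", OF edge_g gr_mono toroot] by blast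
  show ?thesis unfolding is_pforest_def using A1 A2 A3 by blast
qed

lemma CH_chain: "CH n m \<pi> \<in> complete_chains n m"
  unfolding complete_chains_def
proof (intro CollectI conjI allI impI)
  show "length (CH n m \<pi>) = Suc m" by (rule CH_len)
  show "CH n m \<pi> ! 0 = {}" using CH_nth[of 0] by simp
  fix i assume "i \<le> m" thus "is_pforest n (CH n m \<pi> ! i)" using CH_nth F_pf by simp
next
  fix i assume i: "i < m"
  have "Suc i \<in> {1..m}" using i by simp
  have new: "ed n \<pi> (Suc i) \<notin> ed n \<pi> ` {1..i}"
  proof
    assume "ed n \<pi> (Suc i) \<in> ed n \<pi> ` {1..i}"
    then obtain c where c: "c \<in> {1..i}" "ed n \<pi> (Suc i) = ed n \<pi> c" by auto
    hence "pos n \<pi> (Suc i) = pos n \<pi> c" unfolding ed_def by simp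
    hence "Suc i = c" using pos_inj[OF P \<open>Suc i \<in> {1..m}\<close>, of c] c(1) i by auto
    thus False using c(1) by simp
  qed
  have "{1..Suc i} = insert (Suc i) {1..i}" by auto
  hence "CH n m \<pi> ! Suc i = insert (ed n \<pi> (Suc i)) (CH n m \<pi> ! i)"
    using CH_nth[of "Suc i"] CH_nth[of i] i by simp
  show "\<exists>e. e \<notin> CH n m \<pi> ! i \<and> CH n m \<pi> ! Suc i = insert e (CH n m \<pi> ! i)"
  proof (rule exI[of _ "ed n \<pi> (Suc i)"])
    have "CH n m \<pi> ! i = ed n \<pi> ` {1..i}" using CH_nth[of i] i by simp
    thus "ed n \<pi> (Suc i) \<notin> CH n m \<pi> ! i \<and> CH n m \<pi> ! Suc i = insert (ed n \<pi> (Suc i)) (CH n m \<pi> ! i)"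
      using new \<open>CH n m \<pi> ! Suc i = insert (ed n \<pi> (Suc i)) (CH n m \<pi> ! i)\<close> by simp
  qed
qed

end



lemma insert_new_eq: "x \<notin> A \<Longrightarrow> y \<notin> A \<Longrightarrow> insert x A = insert y A \<Longrightarrow> x = y"
  by blast

lemma psi_CH: assumes P: "\<pi> \<in> parking_functions m n" shows "psi m (CH n m \<pi>) = \<pi>"
proof
  fix k
  have CHc: "CH n m \<pi> \<in> complete_chains n m" using CH_chain[OF P] .
  show "psi m (CH n m \<pi>) k = \<pi> k"
  proof (cases "1 \<le> k \<and> k \<le> m")
    case True
    hence k: "1 \<le> k" "k \<le> m" "k \<in> {1..m}" by auto
    have st: "edge (CH n m \<pi>) k \<notin> CH n m \<pi> ! (k - 1)"
      "CH n m \<pi> ! k = insert (edge (CH n m \<pi>) k) (CH n m \<pi> ! (k - 1))"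
      using step[OF CHc k(1,2)] by auto
    have km: "k - 1 \<le> m" using k by arith
    have e1: "CH n m \<pi> ! (k - 1) = ed n \<pi> ` {1..k-1}" using CH_nth[OF km] .
    have e2: "CH n m \<pi> ! k = ed n \<pi> ` {1..k}" using CH_nth[OF k(2)] .
    have "{1..k} = insert k {1..k-1}" using k by auto
    hence e3: "CH n m \<pi> ! k = insert (ed n \<pi> k) (CH n m \<pi> ! (k - 1))" using e1 e2 by simp
    have new: "ed n \<pi> k \<notin> CH n m \<pi> ! (k - 1)"
    proof
      assume "ed n \<pi> k \<in> CH n m \<pi> ! (k - 1)"
      then obtain c where c: "c \<in> {1..k-1}" "ed n \<pi> k = ed n \<pi> c" using e1 by auto
      have cm: "c \<in> {1..m}" using c(1) k by auto
      hence "k = c" using c(2) pos_inj[OF P k(3) cm] unfolding ed_def by simp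
      thus False using c(1) k by auto
    qed
    have "edge (CH n m \<pi>) k = ed n \<pi> k" using insert_new_eq[OF st(1) new] st(2) e3 by simp
    hence "pp (CH n m \<pi>) k = the (\<pi> k) - 1" unfolding ed_def by simp
    moreover have "1 \<le> the (\<pi> k)" using pi_range[OF P k(3)] by simp
    ultimately have "pp (CH n m \<pi>) k + 1 = the (\<pi> k)" by arith
    thus ?thesis using psi_eq'[OF CHc, of k] k pi_some[OF P k(3)] by simp
  next
    case False
    hence "k \<notin> {1..m}" by auto
    thus ?thesis using psi_eq'[OF CHc, of k] pi_none[OF P] False by simp
  qed
qed

lemma CH_psi: assumes C: "C \<in> complete_chains n m" shows "CH n m (psi m C) = C"
proof (rule nth_equalityI)
  show "length (CH n m (psi m C)) = length C" using CH_len len[OF C] by simp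
  fix i assume "i < length (CH n m (psi m C))"
  hence i: "i \<le> m" using CH_len by (simp add: less_Suc_eq_le)
  have P: "psi m C \<in> parking_functions m n" using psi_pf[OF C] .
  have "ed n (psi m C) c = edge C c" if c: "c \<in> {1..m}" for c
  proof -
    have c': "1 \<le> c" "c \<le> m" using c by auto
    have cm: "c - 1 \<le> m" using c' by arith
    have th: "the (psi m C c) = pp C c + 1" using psi_eq'[OF C, of c] c' by simp
    have w: "\<forall>s. park_state n (psi m C) (c - 1) s = None \<longleftrightarrow> s \<notin> bb C ` {1..c-1}"
      using sim[OF C cm] by blast
    have "pos n (psi m C) c = bb C c"
      unfolding pos_def th using least_b[OF C c'(1) c'(2) w] .
    thus ?thesis unfolding ed_def th by simp
  qed
  hence "ed n (psi m C) ` {1..i} = edge C ` {1..i}" using i by (intro image_cong) auto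
  thus "CH n m (psi m C) ! i = C ! i" using CH_nth[OF i] chain_set[OF C i] by simp
qed




lemma psi_lam: "(\<lambda>C. shifted_parent (C ! m) \<circ>\<^sub>m jh C) = psi m"
  unfolding psi_def by (rule ext) simp

lemma uniq:
  assumes C: "C \<in> complete_chains n m" and P: "\<pi>' \<in> parking_functions m n"
    and f: "pf_forest m n \<pi>' = C ! m" and b: "birdseye m n \<pi>' = map_inv (jh C)"
  shows "\<pi>' = psi m C"
proof
  fix k
  show "\<pi>' k = psi m C k"
  proof (cases "k \<in> {1..m}")
    case False
    thus ?thesis using pi_none[OF P False] psi_eq'[OF C, of k] by auto
  next
    case True
    hence k: "1 \<le> k" "k \<le> m" by auto
    have "map_inv (jh C) (bb C k) = birdseye m n (psi m C) (bb C k)"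
      using psi_birdseye[OF C] by simp
    also have "\<dots> = Some k" unfolding birdseye_def using sim_m(2)[OF C] True by blast
    finally have bk: "park_state n \<pi>' m (bb C k) = Some k" using b unfolding birdseye_def by simp
    obtain a where a: "\<pi>' k = Some a" using pi_some[OF P True] by blast
    have "(a - 1, bb C k) \<in> pf_forest m n \<pi>'"
      unfolding pf_forest_def birdseye_def using bk a by (auto simp: map_comp_def)
    hence e1: "(a - 1, bb C k) \<in> C ! m" using f by simp
    have e2: "(pp C k, bb C k) \<in> C ! m" using edge_in[OF C k(1) k(2) order_refl] by simp
    have "a - 1 = pp C k" using pf_up[OF pf[OF C order_refl] e1 e2] .
    moreover have "1 \<le> a" using pi_range[OF P True] a by simp
    ultimately have "a = pp C k + 1" by arith
    thus ?thesis using a psi_eq'[OF C, of k] k by simp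
  qed
qed

theorem theorem4p3:
  fixes n m :: nat
  assumes "1 \<le> m" and "m \<le> n"
  shows "bij_betw (\<lambda>C. shifted_parent (C ! m) \<circ>\<^sub>m jh C)
            (complete_chains n m) (parking_functions m n)
       \<and> (\<forall>C \<in> complete_chains n m.
            pf_forest m n (shifted_parent (C ! m) \<circ>\<^sub>m jh C) = C ! m \<and>
            birdseye m n (shifted_parent (C ! m) \<circ>\<^sub>m jh C) = map_inv (jh C))
       \<and> (\<forall>\<psi>. bij_betw \<psi> (complete_chains n m) (parking_functions m n) \<and>
              (\<forall>C \<in> complete_chains n m.
                 pf_forest m n (\<psi> C) = C ! m \<and> birdseye m n (\<psi> C) = map_inv (jh C))
            \<longrightarrow> (\<forall>C \<in> complete_chains n m. \<psi> C = shifted_parent (C ! m) \<circ>\<^sub>m jh C))"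
  unfolding psi_lam psi_def[symmetric]
proof (intro conjI ballI allI impI)
  show "bij_betw (psi m) (complete_chains n m) (parking_functions m n)"
    unfolding bij_betw_def
  proof
    show "inj_on (psi m) (complete_chains n m)"
      by (rule inj_on_inverseI[of _ "CH n m"]) (rule CH_psi)
    show "psi m ` complete_chains n m = parking_functions m n"
    proof
      show "psi m ` complete_chains n m \<subseteq> parking_functions m n" using psi_pf by blast
      show "parking_functions m n \<subseteq> psi m ` complete_chains n m"
      proof
        fix \<pi> assume P: "\<pi> \<in> parking_functions m n"
        hence "\<pi> = psi m (CH n m \<pi>)" using psi_CH by simp
        thus "\<pi> \<in> psi m ` complete_chains n m" using CH_chain[OF P] by blast
      qed
    qed
  qed
next
  fix C assume "C \<in> complete_chains n m"
  thus "pf_forest m n (psi m C) = C ! m" by (rule psi_forest)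
next
  fix C assume "C \<in> complete_chains n m"
  thus "birdseye m n (psi m C) = map_inv (jh C)" by (rule psi_birdseye)
next
  fix \<psi> C
  assume h: "bij_betw \<psi> (complete_chains n m) (parking_functions m n) \<and>
              (\<forall>C \<in> complete_chains n m.
                 pf_forest m n (\<psi> C) = C ! m \<and> birdseye m n (\<psi> C) = map_inv (jh C))"
    and C: "C \<in> complete_chains n m"
  have "\<psi> C \<in> parking_functions m n" using h C bij_betwE by blast
  thus "\<psi> C = psi m C" using uniq[OF C] h C by blast
qed



end
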